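(* Let $d_1\le\dots\le d_n$ be a \textsc{2-Visits} instance with discretized sequence $A$, and let $\langle a_i,\dots,a_j\rangle$ be a cluster of $A$. In any feasible schedule in which all secondary visits are placed in gaps and the secondary visits appear in order of non-decreasing induced deadlines, the primary visits of nodes $i,\dots,j$ occupy exactly the positions $a_i,\dots,a_j$ (in some order).
   Context: \textsc{2-Visits} (primary/secondary formulation): given non-decreasing positive integers $d_1\le\dots\le d_n$, a feasible schedule is a schedule of length $2n$ (each position $1,\dots,2n$ holds one visit) containing one primary and one secondary visit of each node $i\in[n]$, such that the primary visit of $i$ is at position at most $d_i$, and the secondary visit of $i$ is either before its primary visit or at most $d_i$ positions after its primary visit. The discretized sequence $A=\langle a_1,\dots,a_n\rangle$ is defined by $a_n=d_n$ and $a_i=\min\{a_{i+1}-1,d_i\}$ for $i<n$; a gap is a position $p\in[2n]$ with $p\notin A$. A cluster is a maximal contiguous subsequence $\langle a_p,\dots,a_q\rangle$ of $A$ consisting of consecutive integers. If the primary visit of node $i$ is at position $t_i$, its induced deadline is $d_i+t_i$. Standing assumptions: all entries of $A$ are positive and all $d_i\le 2n$. *)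

theory Defs
  imports Main
begin

function disc :: "(nat \<Rightarrow> nat) \<Rightarrow> nat \<Rightarrow> nat \<Rightarrow> nat" where
  "disc d n i = (if n \<le> i then d n else min (disc d n (i + 1) - 1) (d i))"
  by auto
termination by (relation "measure (\<lambda>(d, n, i). n - i)") auto

declare disc.simps [simp del]

definition instance2 :: "nat \<Rightarrow> (nat \<Rightarrow> nat) \<Rightarrow> bool" where
  "instance2 n d \<longleftrightarrow>
     (\<forall>i\<in>{1..n}. 0 < d i \<and> d i \<le> 2 * n) \<and>
     (\<forall>i\<in>{1..n}. \<forall>j\<in>{1..n}. i \<le> j \<longrightarrow> d i \<le> d j)"

text \<open>Feasible schedule: t i = position of the primary visit of node i,
  s i = position of the secondary visit; the 2n visits occupy the 2n positions
  1..2n bijectively.\<close>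
definition feasible :: "nat \<Rightarrow> (nat \<Rightarrow> nat) \<Rightarrow> (nat \<Rightarrow> nat) \<Rightarrow> (nat \<Rightarrow> nat) \<Rightarrow> bool" where
  "feasible n d t s \<longleftrightarrow>
     bij_betw (\<lambda>(i, prim). if prim then t i else s i) ({1..n} \<times> (UNIV :: bool set)) {1..2 * n} \<and>
     (\<forall>i\<in>{1..n}. t i \<le> d i \<and> (s i < t i \<or> s i \<le> t i + d i))"

definition is_gap :: "nat \<Rightarrow> (nat \<Rightarrow> nat) \<Rightarrow> nat \<Rightarrow> bool" where
  "is_gap n d p \<longleftrightarrow> p \<in> {1..2 * n} \<and> p \<notin> disc d n ` {1..n}"

definition is_cluster :: "nat \<Rightarrow> (nat \<Rightarrow> nat) \<Rightarrow> nat \<Rightarrow> nat \<Rightarrow> bool" where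
  "is_cluster n d p q \<longleftrightarrow>
     1 \<le> p \<and> p \<le> q \<and> q \<le> n \<and>
     (\<forall>k. p \<le> k \<and> k < q \<longrightarrow> disc d n (k + 1) = disc d n k + 1) \<and>
     (p = 1 \<or> disc d n p \<noteq> disc d n (p - 1) + 1) \<and>
     (q = n \<or> disc d n (q + 1) \<noteq> disc d n q + 1)"

end

theory Submission
  imports Defs
begin

lemma disc_step:
  assumes "1 \<le> k" "k < n" "0 < disc d n (k+1)"
  shows "disc d n k < disc d n (k+1)" "disc d n k = disc d n (k+1) - 1 \<or> disc d n k = d k"
  using assms by (subst disc.simps; auto)+

lemma disc_le_d:
  assumes "k \<le> n"
  shows "disc d n k \<le> d k"
  using assms by (subst disc.simps) auto

theorem lemma6:
  fixes n :: nat and d t s :: "nat \<Rightarrow> nat" and i j :: nat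
  assumes "instance2 n d"
    and "\<forall>k\<in>{1..n}. 0 < disc d n k"
    and "is_cluster n d i j"
    and "feasible n d t s"
    and "\<forall>k\<in>{1..n}. is_gap n d (s k)"
    and "\<forall>k\<in>{1..n}. \<forall>l\<in>{1..n}. s k < s l \<longrightarrow> d k + t k \<le> d l + t l"
  shows "t ` {i..j} = disc d n ` {i..j}"
proof -
  define a where "a = disc d n"
  have pos: "\<And>k. 1 \<le> k \<Longrightarrow> k \<le> n \<Longrightarrow> 0 < a k" using assms(2) a_def by auto
  have step: "\<And>k. 1 \<le> k \<Longrightarrow> k < n \<Longrightarrow> a k < a (k+1)"
    using disc_step(1) pos a_def by simp
  have mono: "a k < a l" if "1 \<le> k" "k < l" "l \<le> n" for k l
    using that
  proof (induction l)
    case 0 then show ?case by simp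
  next
    case (Suc m)
    show ?case
    proof (cases "k = m")
      case True then show ?thesis using step[of k] Suc by simp
    next
      case False then show ?thesis using Suc step[of m] by simp
    qed
  qed
  have injA: "inj_on a {1..n}"
  proof (rule inj_onI)
    fix x y assume xy: "x \<in> {1..n}" "y \<in> {1..n}" "a x = a y"
    show "x = y"
    proof (rule ccontr)
      assume "x \<noteq> y"
      then have "x < y \<or> y < x" by auto
      then show False using mono[of x y] mono[of y x] xy by auto
    qed
  qed
  have ad: "\<And>k. k \<le> n \<Longrightarrow> a k \<le> d k" using disc_le_d a_def by simp
  have an: "a n = d n" unfolding a_def by (subst disc.simps) simp
  have dmono: "\<And>k l. k \<in> {1..n} \<Longrightarrow> l \<in> {1..n} \<Longrightarrow> k \<le> l \<Longrightarrow> d k \<le> d l"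
    using assms(1) unfolding instance2_def by blast
  have d2n: "n \<ge> 1 \<Longrightarrow> d n \<le> 2*n" using assms(1) unfolding instance2_def by auto
  have Asub: "a ` {1..n} \<subseteq> {1..2*n}"
  proof
    fix x assume "x \<in> a ` {1..n}"
    then obtain k where k: "k \<in> {1..n}" "x = a k" by auto
    have "a k \<le> a n" using mono[of k n] k by (cases "k = n") auto
    moreover have "0 < a k" using pos k by auto
    ultimately show "x \<in> {1..2*n}" using k an d2n by auto
  qed
  define f where "f = (\<lambda>(i::nat, prim). if prim then t i else s i)"
  have bij: "bij_betw f ({1..n} \<times> (UNIV :: bool set)) {1..2 * n}"
    using assms(4) unfolding feasible_def f_def by blast
  have tpos: "\<And>k. k \<in> {1..n} \<Longrightarrow> t k \<in> {1..2*n}"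
    using bij_betw_apply[OF bij, of "(k, True)" for k] f_def by auto
  have injf: "inj_on f ({1..n} \<times> (UNIV :: bool set))" using bij bij_betw_def by blast
  have injt: "inj_on t {1..n}"
  proof (rule inj_onI)
    fix x y assume "x \<in> {1..n}" "y \<in> {1..n}" "t x = t y"
    then have "f (x, True) = f (y, True)" by (simp add: f_def)
    then show "x = y" using injf \<open>x \<in> {1..n}\<close> \<open>y \<in> {1..n}\<close> by (auto dest: inj_onD)
  qed
  have injs: "inj_on s {1..n}"
  proof (rule inj_onI)
    fix x y assume "x \<in> {1..n}" "y \<in> {1..n}" "s x = s y"
    then have "f (x, False) = f (y, False)" by (simp add: f_def)
    then show "x = y" using injf \<open>x \<in> {1..n}\<close> \<open>y \<in> {1..n}\<close> by (auto dest: inj_onD)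
  qed
  have ts: "\<And>k l. k \<in> {1..n} \<Longrightarrow> l \<in> {1..n} \<Longrightarrow> t k \<noteq> s l"
  proof
    fix k l assume kl: "k \<in> {1..n}" "l \<in> {1..n}" "t k = s l"
    then have "f (k, True) = f (l, False)" by (simp add: f_def)
    then show False using injf kl by (auto dest: inj_onD)
  qed
  have gaps: "s ` {1..n} \<subseteq> {1..2*n} - a ` {1..n}"
    using assms(5) unfolding is_gap_def a_def by auto
  have cardS: "card (s ` {1..n}) = n" using card_image[OF injs] by simp
  have cardG: "card ({1..2*n} - a ` {1..n}) = n"
    using card_Diff_subset[OF _ Asub] card_image[OF injA] by simp
  have SG: "s ` {1..n} = {1..2*n} - a ` {1..n}"
    by (rule card_subset_eq) (use gaps cardS cardG in auto)
  have tA: "\<And>k. k \<in> {1..n} \<Longrightarrow> t k \<in> a ` {1..n}"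
  proof -
    fix k assume k: "k \<in> {1..n}"
    have "t k \<notin> s ` {1..n}" using ts k by auto
    then show "t k \<in> a ` {1..n}" using SG tpos k by blast
  qed
  have prefix: "t ` {1..m} = a ` {1..m}" if m: "m \<le> n" "a m = d m" for m
  proof (cases "m = 0")
    case True then show ?thesis by simp
  next
    case False
    have sub: "t ` {1..m} \<subseteq> a ` {1..m}"
    proof
      fix x assume "x \<in> t ` {1..m}"
      then obtain k where k: "k \<in> {1..m}" "x = t k" by auto
      obtain l where l: "l \<in> {1..n}" "t k = a l" using tA[of k] k m by auto
      have "t k \<le> d k" using assms(4) k m unfolding feasible_def by auto
      also have "d k \<le> d m" using dmono[of k m] k m False by auto
      finally have "a l \<le> a m" using l m by simp
      then have "l \<le> m" using mono[of m l] l False by (cases "m < l") auto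
      then show "x \<in> a ` {1..m}" using k l by auto
    qed
    have c1: "card (t ` {1..m}) = m"
      using card_image[OF inj_on_subset[OF injt]] m by auto
    have c2: "card (a ` {1..m}) = m"
      using card_image[OF inj_on_subset[OF injA]] m by auto
    show ?thesis by (rule card_subset_eq) (use sub c1 c2 in auto)
  qed
  have cl: "1 \<le> i" "i \<le> j" "j \<le> n"
    and c4: "i = 1 \<or> a i \<noteq> a (i - 1) + 1" and c5: "j = n \<or> a (j + 1) \<noteq> a j + 1"
    using assms(3) unfolding is_cluster_def a_def by auto
  have pj: "t ` {1..j} = a ` {1..j}"
  proof (cases "j = n")
    case True then show ?thesis using prefix an by simp
  next
    case False
    then have "a j = a (j+1) - 1 \<or> a j = d j" using disc_step(2)[of j n d] cl pos[of "j+1"] a_def by auto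
    then have "a j = d j" using c5 False step[of j] cl by auto
    then show ?thesis using prefix cl by simp
  qed
  have pi: "t ` {1..i-1} = a ` {1..i-1}"
  proof (cases "i = 1")
    case True then show ?thesis by simp
  next
    case False
    then have "a (i-1) = a (i-1+1) - 1 \<or> a (i-1) = d (i-1)"
      using disc_step(2)[of "i-1" n d] cl pos[of "i"] a_def by auto
    then have "a (i-1) = d (i-1)" using c4 False step[of "i-1"] cl by auto
    then show ?thesis using prefix cl by simp
  qed
  have split: "{i..j} = {1..j} - {1..i-1}" using cl by auto
  have "t ` {i..j} = t ` {1..j} - t ` {1..i-1}"
    unfolding split by (rule inj_on_image_set_diff[OF injt]) (use cl in auto)
  also have "\<dots> = a ` {1..j} - a ` {1..i-1}" using pj pi by simp
  also have "\<dots> = a ` {i..j}"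
    unfolding split by (rule inj_on_image_set_diff[OF injA, symmetric]) (use cl in auto)
  finally show ?thesis unfolding a_def .
qed

end
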